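(* In the setting described in the context, RLO-CCU-DG is feasible if and only if $\sum_{j\in J}a_{ij}\hat{x}_j\ge b_i$ for all $i\in I$ and $\Theta\cap\Omega\neq\varnothing$.
   Context: Let $I=\{1,\dots,m\}$, $J=\{1,\dots,n\}$. Given are $a_{ij}\in\mathbb{R}$, $b\in\mathbb{R}^m$, index sets $J_i\subseteq J$, nonnegative numbers $\alpha_{ij}$ ($j\in J_i,i\in I$), an observed point $\hat{x}\in\mathbb{R}^n$, and a convex set $\Omega\subseteq\mathbb{R}^m$. For $i\in I$ and $x\in\mathbb{R}^n$ let $j^i_1(x),\dots,j^i_{|J_i|}(x)$ order $J_i$ so that $\alpha_{ij^i_k(x)}|x_{j^i_k(x)}|$ is the $k$-th largest element of $\{\alpha_{ij}|x_j|\}_{j\in J_i}$, and for $\Gamma_i\in[0,|J_i|]$ let $P_i(\Gamma_i,x)=\sum_{k=1}^{\lfloor\Gamma_i\rfloor}\alpha_{ij^i_k(x)}|x_{j^i_k(x)}|+(\Gamma_i-\lfloor\Gamma_i\rfloor)\alpha_{ij^i_{\lceil\Gamma_i\rceil}(x)}|x_{j^i_{\lceil\Gamma_i\rceil}(x)}|$ (last term $0$ for integer $\Gamma_i$). Let $s_i=\sum_{j\in J}a_{ij}\hat{x}_j-b_i$, $\hat{I}=\{i\in I:0\le s_i\le\sum_{j\in J_i}\alpha_{ij}|\hat{x}_j|\}$, and for $i\in\hat{I}$ let $\underline{\Gamma}_i=\min\{\sum_{j\in J_i}w_j:\sum_{j\in J_i}\alpha_{ij}|\hat{x}_j|w_j=s_i,\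 0\le w_j\le1\}$, so $s_i=P_i(\underline{\Gamma}_i,\hat{x})$. Standing assumption: for each $i\in\hat{I}$, $\underline{\Gamma}_i$ is the unique $\Gamma_i\in[0,|J_i|]$ with $s_i=P_i(\Gamma_i,\hat{x})$. Let $\Theta=\{\Gamma\in\mathbb{R}^m:\Gamma_i\in[0,\underline{\Gamma}_i]\ \forall i\in\hat{I};\ \Gamma_i\in[0,|J_i|]\ \forall i\in I\setminus\hat{I}\}$. The problem RLO-CCU-DG is \[ \min_{\Gamma,c,u,y,z,\pi,\varphi,\lambda,\mu}\ \sum_{j\in J}c_j\hat{x}_j-\sum_{i\in I}b_i\pi_i \] subject to: $\Gamma\in\Omega$; $\alpha_{ij}\hat{x}_j+u_{ij}\ge0$ and $-\alpha_{ij}\hat{x}_j+u_{ij}\ge0$ ($j\in J_i,i\in I$); $y_{ij}+z_i\ge u_{ij}$ ($j\in J_i,i\in I$); $\sum_{j\in J}a_{ij}\hat{x}_j-\sum_{j\in J_i}y_{ij}-\Gamma_iz_i\ge b_i$ ($i\in I$); $y_{ij},z_i\ge0$; $0\le\Gamma_i\le|J_i|$ ($i\in I$); $\sum_{i\in I}\pi_i=1$; $\sum_{i\in I}a_{ij}\pi_i+\sum_{i\in I:j\in J_i}\alpha_{ij}(\lambda_{ij}-\mu_{ij})=c_j$ ($j\in J$); $\varphi_{ij}\le\pi_i$ and $\varphi_{ij}=\lambda_{ij}+\mu_{ij}$ ($j\in J_i,i\in I$); $\sum_{j\in J_i}\varphi_{ij}\le\Gamma_i\pi_i$ ($i\in I$);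 $\pi_i,\varphi_{ij},\lambda_{ij},\mu_{ij}\ge0$ ($j\in J_i,i\in I$). *)

theory Defs
  imports "HOL-Analysis.Analysis"
begin

text \<open>Index sets: I = UNIV :: 'm (finite, |I| = m), J = UNIV :: 'n (finite, |J| = n).
  The data: a i j, b i, index sets Js i \<subseteq> J, weights al i j, observed point xh.\<close>

text \<open>Values alpha_ij |x_j| (j in J_i) listed in nonincreasing order; the k-th largest
  (k = 1,2,...) is entry k-1 of this list.\<close>
definition sorted_vals :: "('m \<Rightarrow> 'n::linorder \<Rightarrow> real) \<Rightarrow> ('m \<Rightarrow> 'n set) \<Rightarrow> 'm \<Rightarrow> ('n \<Rightarrow> real) \<Rightarrow> real list" where
  "sorted_vals al Js i x = rev (sort (map (\<lambda>j. al i j * \<bar>x j\<bar>) (sorted_list_of_set (Js i))))"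

definition Pfun :: "('m \<Rightarrow> 'n::linorder \<Rightarrow> real) \<Rightarrow> ('m \<Rightarrow> 'n set) \<Rightarrow> 'm \<Rightarrow> real \<Rightarrow> ('n \<Rightarrow> real) \<Rightarrow> real" where
  "Pfun al Js i G x =
     (\<Sum>k<nat \<lfloor>G\<rfloor>. sorted_vals al Js i x ! k)
     + (if G \<in> \<int> then 0 else (G - of_int \<lfloor>G\<rfloor>) * (sorted_vals al Js i x ! (nat \<lceil>G\<rceil> - 1)))"

definition slack :: "('m \<Rightarrow> 'n::finite \<Rightarrow> real) \<Rightarrow> ('m \<Rightarrow> real) \<Rightarrow> ('n \<Rightarrow> real) \<Rightarrow> 'm \<Rightarrow> real" where
  "slack a b xh i = (\<Sum>j\<in>UNIV. a i j * xh j) - b i"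

definition Ihat :: "('m::finite \<Rightarrow> 'n::finite \<Rightarrow> real) \<Rightarrow> ('m \<Rightarrow> real) \<Rightarrow> ('m \<Rightarrow> 'n set) \<Rightarrow> ('m \<Rightarrow> 'n \<Rightarrow> real) \<Rightarrow> ('n \<Rightarrow> real) \<Rightarrow> 'm set" where
  "Ihat a b Js al xh = {i. 0 \<le> slack a b xh i \<and> slack a b xh i \<le> (\<Sum>j\<in>Js i. al i j * \<bar>xh j\<bar>)}"

definition Gam_low :: "('m \<Rightarrow> 'n::finite \<Rightarrow> real) \<Rightarrow> ('m \<Rightarrow> real) \<Rightarrow> ('m \<Rightarrow> 'n set) \<Rightarrow> ('m \<Rightarrow> 'n \<Rightarrow> real) \<Rightarrow> ('n \<Rightarrow> real) \<Rightarrow> 'm \<Rightarrow> real" where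
  "Gam_low a b Js al xh i = Inf {\<Sum>j\<in>Js i. w j | w :: 'n \<Rightarrow> real.
      (\<Sum>j\<in>Js i. al i j * \<bar>xh j\<bar> * w j) = slack a b xh i \<and> (\<forall>j\<in>Js i. 0 \<le> w j \<and> w j \<le> 1)}"

definition Theta :: "('m::finite \<Rightarrow> 'n::finite \<Rightarrow> real) \<Rightarrow> ('m \<Rightarrow> real) \<Rightarrow> ('m \<Rightarrow> 'n set) \<Rightarrow> ('m \<Rightarrow> 'n \<Rightarrow> real) \<Rightarrow> ('n \<Rightarrow> real) \<Rightarrow> (real^'m) set" where
  "Theta a b Js al xh = {G. (\<forall>i\<in>Ihat a b Js al xh. 0 \<le> G $ i \<and> G $ i \<le> Gam_low a b Js al xh i) \<and>
                         (\<forall>i\<in>UNIV - Ihat a b Js al xh. 0 \<le> G $ i \<and> G $ i \<le> real (card (Js i)))}"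

text \<open>Feasible points of RLO-CCU-DG (the objective plays no role in feasibility).\<close>
definition RLO_CCU_DG_feasible_point ::
  "('m::finite \<Rightarrow> 'n::finite \<Rightarrow> real) \<Rightarrow> ('m \<Rightarrow> real) \<Rightarrow> ('m \<Rightarrow> 'n set) \<Rightarrow> ('m \<Rightarrow> 'n \<Rightarrow> real) \<Rightarrow> ('n \<Rightarrow> real)
   \<Rightarrow> (real^'m) set \<Rightarrow> real^'m \<Rightarrow> ('n \<Rightarrow> real) \<Rightarrow> ('m \<Rightarrow> 'n \<Rightarrow> real) \<Rightarrow> ('m \<Rightarrow> 'n \<Rightarrow> real) \<Rightarrow> ('m \<Rightarrow> real)
   \<Rightarrow> ('m \<Rightarrow> real) \<Rightarrow> ('m \<Rightarrow> 'n \<Rightarrow> real) \<Rightarrow> ('m \<Rightarrow> 'n \<Rightarrow> real) \<Rightarrow> ('m \<Rightarrow> 'n \<Rightarrow> real) \<Rightarrow> bool" where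
  "RLO_CCU_DG_feasible_point a b Js al xh \<Omega> G c u y z \<pi> \<phi> lam mu \<longleftrightarrow>
     G \<in> \<Omega>
   \<and> (\<forall>i. \<forall>j\<in>Js i. al i j * xh j + u i j \<ge> 0 \<and> - al i j * xh j + u i j \<ge> 0)
   \<and> (\<forall>i. \<forall>j\<in>Js i. y i j + z i \<ge> u i j)
   \<and> (\<forall>i. (\<Sum>j\<in>UNIV. a i j * xh j) - (\<Sum>j\<in>Js i. y i j) - G $ i * z i \<ge> b i)
   \<and> (\<forall>i. \<forall>j\<in>Js i. y i j \<ge> 0)
   \<and> (\<forall>i. z i \<ge> 0)
   \<and> (\<forall>i. 0 \<le> G $ i \<and> G $ i \<le> real (card (Js i)))
   \<and> (\<Sum>i\<in>UNIV. \<pi> i) = 1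
   \<and> (\<forall>j. (\<Sum>i\<in>UNIV. a i j * \<pi> i) + (\<Sum>i\<in>{i. j \<in> Js i}. al i j * (lam i j - mu i j)) = c j)
   \<and> (\<forall>i. \<forall>j\<in>Js i. \<phi> i j \<le> \<pi> i \<and> \<phi> i j = lam i j + mu i j)
   \<and> (\<forall>i. (\<Sum>j\<in>Js i. \<phi> i j) \<le> G $ i * \<pi> i)
   \<and> (\<forall>i. \<pi> i \<ge> 0)
   \<and> (\<forall>i. \<forall>j\<in>Js i. \<phi> i j \<ge> 0 \<and> lam i j \<ge> 0 \<and> mu i j \<ge> 0)"

definition RLO_CCU_DG_feasible ::
  "('m::finite \<Rightarrow> 'n::finite \<Rightarrow> real) \<Rightarrow> ('m \<Rightarrow> real) \<Rightarrow> ('m \<Rightarrow> 'n set) \<Rightarrow> ('m \<Rightarrow> 'n \<Rightarrow> real) \<Rightarrow> ('n \<Rightarrow> real)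
   \<Rightarrow> (real^'m) set \<Rightarrow> bool" where
  "RLO_CCU_DG_feasible a b Js al xh \<Omega> \<longleftrightarrow>
     (\<exists>G c u y z \<pi> \<phi> lam mu. RLO_CCU_DG_feasible_point a b Js al xh \<Omega> G c u y z \<pi> \<phi> lam mu)"

end

theory Submission imports Defs "HOL-Library.Multiset" begin

lemma sort_map_eq:
  fixes v :: "'a::linorder \<Rightarrow> real"
  shows "sort (map v xs) = map v (sort_key v xs)"
  by (rule properties_for_sort) (simp_all add: mset_map)

lemma perm_exists:
  fixes v :: "'a::linorder \<Rightarrow> real"
  assumes "finite A"
  shows "\<exists>js. distinct js \<and> set js = A \<and> rev (sort (map v (sorted_list_of_set A))) = map v js"
  apply (rule exI[of _ "rev (sort_key v (sorted_list_of_set A))"])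
  using assms by (simp add: sort_map_eq rev_map)

lemma sum_set_nth:
  assumes "distinct js"
  shows "(\<Sum>j\<in>set js. g j) = (\<Sum>k<length js. (g (js!k)::real))"
  using assms by (simp add: sum_list_distinct_conv_sum_set[symmetric] sum_list_sum_nth atLeast0LessThan)

definition Q :: "real list \<Rightarrow> real \<Rightarrow> real" where
  "Q L G = (\<Sum>k<nat \<lfloor>G\<rfloor>. L!k) + (G - of_int \<lfloor>G\<rfloor>) * L!(nat \<lfloor>G\<rfloor>)"

lemma Pfun_Q:
  assumes "G \<ge> 0"
  shows "Pfun al Js i G x = Q (sorted_vals al Js i x) G"
proof (cases "G \<in> \<int>")
  case True
  then have "G = of_int \<lfloor>G\<rfloor>" by (metis Ints_cases floor_of_int)
  then show ?thesis using True unfolding Pfun_def Q_def by simp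
next
  case False
  then have "\<lceil>G\<rceil> = \<lfloor>G\<rfloor> + 1" by (metis Ints_of_int ceiling_altdef)
  moreover have "\<lfloor>G\<rfloor> \<ge> 0" using assms by simp
  ultimately have "nat \<lceil>G\<rceil> - 1 = nat \<lfloor>G\<rfloor>" by simp
  then show ?thesis using False unfolding Pfun_def Q_def by simp
qed

lemma floor_cases:
  assumes "0 \<le> G" "G \<le> real N"
  shows "nat \<lfloor>G\<rfloor> < N \<or> (nat \<lfloor>G\<rfloor> = N \<and> G = real N)"
proof -
  have a: "\<lfloor>G\<rfloor> \<le> int N" using assms by (metis floor_mono floor_of_nat)
  have b: "of_int \<lfloor>G\<rfloor> \<le> G" by simp
  have c: "\<lfloor>G\<rfloor> \<ge> 0" using assms by simp
  have d: "nat \<lfloor>G\<rfloor> < N \<longleftrightarrow> \<lfloor>G\<rfloor> < int N" using c by (simp add: nat_less_iff)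
  show ?thesis
  proof (cases "\<lfloor>G\<rfloor> = int N")
    case True
    then show ?thesis using b assms by simp
  next
    case False
    then show ?thesis using a d by simp
  qed
qed

lemma Q_mono:
  assumes nn: "\<And>k. k < length L \<Longrightarrow> L!k \<ge> 0"
    and g: "0 \<le> G1" "G1 \<le> G2" "G2 \<le> real (length L)"
  shows "Q L G1 \<le> Q L G2"
proof -
  define n1 where "n1 = nat \<lfloor>G1\<rfloor>"
  define n2 where "n2 = nat \<lfloor>G2\<rfloor>"
  have f1: "real n1 = of_int \<lfloor>G1\<rfloor>" "G1 - of_int \<lfloor>G1\<rfloor> < 1" "G1 - of_int \<lfloor>G1\<rfloor> \<ge> 0"
    using g unfolding n1_def by auto linarith
  have f2: "real n2 = of_int \<lfloor>G2\<rfloor>" "G2 - of_int \<lfloor>G2\<rfloor> < 1" "G2 - of_int \<lfloor>G2\<rfloor> \<ge> 0"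
    using g unfolding n2_def by auto linarith
  have le: "n1 \<le> n2" unfolding n1_def n2_def using g by (simp add: floor_mono nat_mono)
  have Q1: "Q L G1 = (\<Sum>k<n1. L!k) + (G1 - real n1) * L!n1" unfolding Q_def n1_def using f1 n1_def by simp
  have Q2: "Q L G2 = (\<Sum>k<n2. L!k) + (G2 - real n2) * L!n2" unfolding Q_def n2_def using f2 n2_def by simp
  consider "n2 = length L" "G2 = real (length L)" | "n2 < length L"
    using floor_cases[OF _ g(3)] g unfolding n2_def by linarith
  then show ?thesis
  proof cases
    case 1
    show ?thesis
    proof (cases "n1 = n2")
      case True
      then have "G1 = G2" using f1 f2 g 1 by linarith
      then show ?thesis by simp
    next
      case False
      then have lt: "n1 < length L" using le 1 by simp
      have "Q L G1 \<le> (\<Sum>k<n1. L!k) + L!n1"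
        unfolding Q1 using f1 nn[OF lt] by (intro add_left_mono mult_left_le_one_le) auto
      also have "\<dots> = (\<Sum>k<Suc n1. L!k)" by simp
      also have "\<dots> \<le> (\<Sum>k<n2. L!k)"
        apply (rule sum_mono2) using False le nn 1 by auto
      also have "\<dots> \<le> Q L G2" unfolding Q2 using 1 by simp
      finally show ?thesis .
    qed
  next
    case 2
    show ?thesis
    proof (cases "n1 = n2")
      case True
      then show ?thesis unfolding Q1 Q2 using g nn[OF 2] by (simp add: mult_right_mono)
    next
      case False
      then have lt: "n1 < length L" using le 2 by simp
      have "Q L G1 \<le> (\<Sum>k<n1. L!k) + L!n1"
        unfolding Q1 using f1 nn[OF lt] by (intro add_left_mono mult_left_le_one_le) auto
      also have "\<dots> = (\<Sum>k<Suc n1. L!k)" by simp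
      also have "\<dots> \<le> (\<Sum>k<n2. L!k)"
        apply (rule sum_mono2) using False le nn 2 by auto
      also have "\<dots> \<le> Q L G2" unfolding Q2 using 2 f2 nn[OF 2] by simp
      finally show ?thesis .
    qed
  qed
qed

lemma Q_upper:
  fixes v y :: "'a \<Rightarrow> real"
  assumes L: "L = map v js"
    and vy: "\<And>k. k < length js \<Longrightarrow> v (js!k) \<le> y (js!k) + z"
    and y0: "\<And>k. k < length js \<Longrightarrow> y (js!k) \<ge> 0"
    and z0: "z \<ge> 0" and g: "0 \<le> G" "G \<le> real (length js)"
  shows "Q L G \<le> (\<Sum>k<length js. y (js!k)) + G * z"
proof -
  define n where "n = nat \<lfloor>G\<rfloor>"
  define N where "N = length js"
  have f: "real n = of_int \<lfloor>G\<rfloor>" "G - of_int \<lfloor>G\<rfloor> < 1" "G - of_int \<lfloor>G\<rfloor> \<ge> 0"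
    using g unfolding n_def by auto linarith
  have Qe: "Q L G = (\<Sum>k<n. L!k) + (G - real n) * L!n" unfolding Q_def n_def using f n_def by simp
  consider "n = N" "G = real N" | "n < N"
    using floor_cases[OF g] unfolding n_def N_def by blast
  then show ?thesis
  proof cases
    case 1
    have "Q L G = (\<Sum>k<N. v (js!k))" unfolding Qe using 1 L N_def by simp
    also have "\<dots> \<le> (\<Sum>k<N. y (js!k) + z)" by (rule sum_mono) (use vy N_def in auto)
    also have "\<dots> = (\<Sum>k<N. y (js!k)) + G * z" using 1 by (simp add: sum.distrib)
    finally show ?thesis unfolding N_def .
  next
    case 2
    have "Q L G = (\<Sum>k<n. v (js!k)) + (G - real n) * v (js!n)" unfolding Qe using 2 L N_def by simp
    also have "\<dots> \<le> (\<Sum>k<n. y (js!k) + z) + (G - real n) * (y (js!n) + z)"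
      apply (intro add_mono sum_mono mult_left_mono)
      using vy 2 N_def f by auto
    also have "\<dots> = (\<Sum>k<n. y (js!k)) + (G - real n) * y (js!n) + G * z"
      by (simp add: sum.distrib algebra_simps)
    also have "\<dots> \<le> (\<Sum>k<n. y (js!k)) + y (js!n) + G * z"
      using f y0[of n] 2 N_def by (intro add_mono mult_left_le_one_le) auto
    also have "\<dots> = (\<Sum>k<Suc n. y (js!k)) + G * z" by simp
    also have "\<dots> \<le> (\<Sum>k<N. y (js!k)) + G * z"
      apply (intro add_right_mono sum_mono2) using 2 y0 N_def by auto
    finally show ?thesis unfolding N_def .
  qed
qed

lemma Q_attain:
  fixes v :: "'a \<Rightarrow> real"
  assumes L: "L = map v js"
    and srt: "sorted (rev L)"
    and nn: "\<And>k. k < length js \<Longrightarrow> v (js!k) \<ge> 0"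
    and g: "0 \<le> G" "G \<le> real (length js)"
  shows "\<exists>z\<ge>0. (\<Sum>k<length js. max (v (js!k) - z) 0) + G * z = Q L G"
proof -
  define n where "n = nat \<lfloor>G\<rfloor>"
  define N where "N = length js"
  have f: "real n = of_int \<lfloor>G\<rfloor>" "G - of_int \<lfloor>G\<rfloor> < 1" "G - of_int \<lfloor>G\<rfloor> \<ge> 0"
    using g unfolding n_def by auto linarith
  have Qe: "Q L G = (\<Sum>k<n. L!k) + (G - real n) * L!n" unfolding Q_def n_def using f n_def by simp
  consider "n = N" "G = real N" | "n < N"
    using floor_cases[OF g] unfolding n_def N_def by blast
  then show ?thesis
  proof cases
    case 1
    have "(\<Sum>k<N. max (v (js!k) - 0) 0) + G * 0 = (\<Sum>k<N. v (js!k))"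
      using nn N_def by (simp add: max_def, intro sum.cong) (auto simp: order_antisym)
    also have "\<dots> = Q L G" unfolding Qe using 1 L N_def by simp
    finally show ?thesis unfolding N_def by (intro exI[of _ 0]) simp
  next
    case 2
    define z where "z = v (js!n)"
    have mono: "v (js!k) \<le> v (js!k')" if "k' \<le> k" "k < N" for k k'
      using sorted_rev_nth_mono[OF srt that(1)] that L N_def by simp
    have split: "{..<N} = {..<n} \<union> {n..<N}" using 2 by auto
    have "(\<Sum>k<N. max (v (js!k) - z) 0) = (\<Sum>k<n. max (v (js!k) - z) 0) + (\<Sum>k\<in>{n..<N}. max (v (js!k) - z) 0)"
      unfolding split by (rule sum.union_disjoint) auto
    also have "(\<Sum>k\<in>{n..<N}. max (v (js!k) - z) 0) = 0"
      by (rule sum.neutral) (use mono 2 in \<open>auto simp: z_def\<close>)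
    also have "(\<Sum>k<n. max (v (js!k) - z) 0) = (\<Sum>k<n. v (js!k) - z)"
      by (rule sum.cong) (use mono 2 in \<open>auto simp: z_def\<close>)
    finally have "(\<Sum>k<N. max (v (js!k) - z) 0) + G * z = (\<Sum>k<n. v (js!k)) - real n * z + G * z"
      by (simp add: sum_subtractf)
    also have "\<dots> = Q L G" unfolding Qe using 2 L N_def z_def by (simp add: algebra_simps)
    finally show ?thesis unfolding N_def using nn 2 N_def z_def by (intro exI[of _ z]) simp
  qed
qed

lemma sv_perm:
  assumes "finite (Js i)"
  shows "\<exists>js. distinct js \<and> set js = Js i \<and> sorted_vals al Js i x = map (\<lambda>j. al i j * \<bar>x j\<bar>) js
     \<and> sorted (rev (sorted_vals al Js i x)) \<and> length js = card (Js i)"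
proof -
  obtain js where js: "distinct js" "set js = Js i"
    "rev (sort (map (\<lambda>j. al i j * \<bar>x j\<bar>) (sorted_list_of_set (Js i)))) = map (\<lambda>j. al i j * \<bar>x j\<bar>) js"
    using perm_exists[OF assms] by blast
  have "sorted (rev (rev (sort (map (\<lambda>j. al i j * \<bar>x j\<bar>) (sorted_list_of_set (Js i))))))" by simp
  then have "sorted (rev (sorted_vals al Js i x))" unfolding sorted_vals_def .
  then show ?thesis
    apply (intro exI[of _ js])
    using js unfolding sorted_vals_def by (auto simp: distinct_card[symmetric] simp del: rev_map)
qed

lemma Pfun_mono:
  assumes "finite (Js i)" "\<And>j. j \<in> Js i \<Longrightarrow> al i j \<ge> 0"
    and "0 \<le> G1" "G1 \<le> G2" "G2 \<le> real (card (Js i))"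
  shows "Pfun al Js i G1 x \<le> Pfun al Js i G2 x"
proof -
  obtain js where js: "distinct js" "set js = Js i" "sorted_vals al Js i x = map (\<lambda>j. al i j * \<bar>x j\<bar>) js"
     "length js = card (Js i)"
    using sv_perm[of Js i, OF assms(1)] by blast
  have mem: "\<And>k. k < length js \<Longrightarrow> js!k \<in> Js i" using js(2) nth_mem by blast
  show ?thesis
    unfolding Pfun_Q[OF assms(3)] Pfun_Q[of G2, OF order_trans[OF assms(3,4)]]
    apply (rule Q_mono)
    using assms js by (auto simp: js(3) intro!: mult_nonneg_nonneg assms(2) nth_mem[of _ js, simplified js(2)])
qed

lemma Pfun_upper:
  assumes "finite (Js i)"
    and vy: "\<And>j. j \<in> Js i \<Longrightarrow> al i j * \<bar>x j\<bar> \<le> y j + z"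
    and y0: "\<And>j. j \<in> Js i \<Longrightarrow> y j \<ge> 0"
    and z0: "z \<ge> 0" and g: "0 \<le> G" "G \<le> real (card (Js i))"
  shows "Pfun al Js i G x \<le> (\<Sum>j\<in>Js i. y j) + G * z"
proof -
  obtain js where js: "distinct js" "set js = Js i" "sorted_vals al Js i x = map (\<lambda>j. al i j * \<bar>x j\<bar>) js"
     "length js = card (Js i)"
    using sv_perm[of Js i, OF assms(1)] by blast
  have mem: "\<And>k. k < length js \<Longrightarrow> js!k \<in> Js i" using js(2) nth_mem by blast
  have "Q (sorted_vals al Js i x) G \<le> (\<Sum>k<length js. y (js!k)) + G * z"
    apply (rule Q_upper[OF js(3)])
    using vy y0 z0 g js mem by auto
  then show ?thesis unfolding Pfun_Q[OF g(1)] using sum_set_nth[OF js(1), of y] js(2) by simp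
qed

lemma Pfun_attain:
  assumes "finite (Js i)" "\<And>j. j \<in> Js i \<Longrightarrow> al i j \<ge> 0"
    and g: "0 \<le> G" "G \<le> real (card (Js i))"
  shows "\<exists>z\<ge>0. (\<Sum>j\<in>Js i. max (al i j * \<bar>x j\<bar> - z) 0) + G * z = Pfun al Js i G x"
proof -
  obtain js where js: "distinct js" "set js = Js i" "sorted_vals al Js i x = map (\<lambda>j. al i j * \<bar>x j\<bar>) js"
     "sorted (rev (sorted_vals al Js i x))" "length js = card (Js i)"
    using sv_perm[of Js i, OF assms(1)] by blast
  have mem: "\<And>k. k < length js \<Longrightarrow> js!k \<in> Js i" using js(2) nth_mem by blast
  have nn: "\<And>k. k < length js \<Longrightarrow> al i (js!k) * \<bar>x (js!k)\<bar> \<ge> 0" using mem assms(2) by auto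
  obtain z where z: "z \<ge> 0" "(\<Sum>k<length js. max (al i (js!k) * \<bar>x (js!k)\<bar> - z) 0) + G * z = Q (sorted_vals al Js i x) G"
    using Q_attain[OF js(3) js(4) nn g[unfolded js(5)[symmetric]]] by blast
  show ?thesis
    apply (rule exI[of _ z])
    using z sum_set_nth[OF js(1), of "\<lambda>j. max (al i j * \<bar>x j\<bar> - z) 0"] js(2) Pfun_Q[OF g(1), of al Js i x] by simp
qed

lemma Gam_low_bounds:
  fixes a :: "'m::finite \<Rightarrow> 'n::finite \<Rightarrow> real" and Js :: "'m \<Rightarrow> 'n set"
  assumes "finite (Js i)" "\<And>j. j \<in> Js i \<Longrightarrow> al i j \<ge> 0"
    and "i \<in> Ihat a b Js al xh"
  shows "0 \<le> Gam_low a b Js al xh i \<and> Gam_low a b Js al xh i \<le> real (card (Js i))"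
proof -
  define s where "s = slack a b xh i"
  define T where "T = (\<Sum>j\<in>Js i. al i j * \<bar>xh j\<bar>)"
  have sT: "0 \<le> s" "s \<le> T" using assms(3) unfolding Ihat_def s_def T_def by auto
  define S where "S = {\<Sum>j\<in>Js i. w j | w.
      (\<Sum>j\<in>Js i. al i j * \<bar>xh j\<bar> * w j) = slack a b xh i \<and> (\<forall>j\<in>Js i. 0 \<le> w j \<and> w j \<le> 1)}"
  have GS: "Gam_low a b Js al xh i = Inf S" unfolding Gam_low_def S_def by simp
  define w0 :: \<open>'n \<Rightarrow> real\<close> where "w0 = (\<lambda>j. if T = 0 then 0 else s / T)"
  have w0a: "(\<Sum>j\<in>Js i. al i j * \<bar>xh j\<bar> * w0 j) = s"
  proof (cases "T = 0")
    case True then show ?thesis using sT unfolding w0_def by simp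
  next
    case False
    have "(\<Sum>j\<in>Js i. al i j * \<bar>xh j\<bar> * w0 j) = T * (s / T)"
      unfolding w0_def T_def using False T_def by (simp add: sum_distrib_right sum_divide_distrib[symmetric])
    then show ?thesis using False by simp
  qed
  have w0b: "\<forall>j\<in>Js i. 0 \<le> w0 j \<and> w0 j \<le> 1" using sT unfolding w0_def by auto
  have mem: "(\<Sum>j\<in>Js i. w0 j) \<in> S" unfolding S_def using w0a w0b s_def by blast
  have lb: "\<forall>x\<in>S. 0 \<le> x" unfolding S_def by (auto intro: sum_nonneg)
  have bdd: "bdd_below S" using lb by (auto simp: bdd_below_def)
  have ub: "(\<Sum>j\<in>Js i. w0 j) \<le> (\<Sum>j\<in>Js i. 1)" using w0b by (intro sum_mono) auto
  have "Inf S \<le> (\<Sum>j\<in>Js i. w0 j)" by (rule cInf_lower[OF mem bdd])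
  moreover have "0 \<le> Inf S" using mem lb by (intro cInf_greatest) auto
  ultimately show ?thesis unfolding GS using ub by simp
qed

theorem proposition4:
  fixes a :: "'m::finite \<Rightarrow> 'n::{finite,linorder} \<Rightarrow> real"
    and b :: "'m \<Rightarrow> real"
    and Js :: "'m \<Rightarrow> 'n set"
    and al :: "'m \<Rightarrow> 'n \<Rightarrow> real"
    and xh :: "'n \<Rightarrow> real"
    and \<Omega> :: "(real^'m) set"
  assumes al_nonneg: "\<And>i j. j \<in> Js i \<Longrightarrow> al i j \<ge> 0"
    and \<Omega>_convex: "convex \<Omega>"
    and standing: "\<And>i. i \<in> Ihat a b Js al xh \<Longrightarrow>
        \<forall>G \<in> {0 .. real (card (Js i))}.
          (slack a b xh i = Pfun al Js i G xh \<longleftrightarrow> G = Gam_low a b Js al xh i)"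
  shows "RLO_CCU_DG_feasible a b Js al xh \<Omega> \<longleftrightarrow>
           (\<forall>i. (\<Sum>j\<in>UNIV. a i j * xh j) \<ge> b i) \<and> Theta a b Js al xh \<inter> \<Omega> \<noteq> {}"
proof
  assume "RLO_CCU_DG_feasible a b Js al xh \<Omega>"
  then obtain G c u y z \<pi> \<phi> lam mu where P: "RLO_CCU_DG_feasible_point a b Js al xh \<Omega> G c u y z \<pi> \<phi> lam mu"
    unfolding RLO_CCU_DG_feasible_def by blast
  note P = P[unfolded RLO_CCU_DG_feasible_point_def]
  have sge: "slack a b xh i \<ge> (\<Sum>j\<in>Js i. y i j) + G$i * z i" for i
  proof -
    have "b i \<le> (\<Sum>j\<in>UNIV. a i j * xh j) - (\<Sum>j\<in>Js i. y i j) - G$i * z i" using P by blast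
    then show ?thesis unfolding slack_def by linarith
  qed
  have Gb: "0 \<le> G$i" "G$i \<le> real (card (Js i))" for i using P by blast+
  have z0: "z i \<ge> 0" for i using P by blast
  have y0: "j \<in> Js i \<Longrightarrow> y i j \<ge> 0" for i j using P by blast
  have vy: "j \<in> Js i \<Longrightarrow> al i j * \<bar>xh j\<bar> \<le> y i j + z i" for i j
  proof -
    assume j: "j \<in> Js i"
    have "al i j * \<bar>xh j\<bar> = \<bar>al i j * xh j\<bar>" using al_nonneg[OF j] by (simp add: abs_mult)
    also have "\<dots> \<le> u i j"
    proof -
      have "0 \<le> al i j * xh j + u i j" "0 \<le> - al i j * xh j + u i j" using P j by blast+
      then show ?thesis by linarith
    qed
    also have "\<dots> \<le> y i j + z i" using P j by auto
    finally show ?thesis .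
  qed
  have A: "\<forall>i. (\<Sum>j\<in>UNIV. a i j * xh j) \<ge> b i"
  proof
    fix i
    have "0 \<le> (\<Sum>j\<in>Js i. y i j) + G$i * z i"
      using y0 Gb z0 by (intro add_nonneg_nonneg sum_nonneg mult_nonneg_nonneg) auto
    then show "(\<Sum>j\<in>UNIV. a i j * xh j) \<ge> b i" using sge[of i] unfolding slack_def by simp
  qed
  have "G \<in> Theta a b Js al xh"
    unfolding Theta_def
  proof (intro CollectI conjI ballI)
    fix i assume i: "i \<in> Ihat a b Js al xh"
    show "0 \<le> G$i" by (rule Gb)
    have gl: "0 \<le> Gam_low a b Js al xh i" "Gam_low a b Js al xh i \<le> real (card (Js i))"
      using Gam_low_bounds[OF _ al_nonneg i] by auto
    show "G$i \<le> Gam_low a b Js al xh i"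
    proof (rule ccontr)
      assume "\<not> ?thesis"
      then have lt: "Gam_low a b Js al xh i < G$i" by simp
      define G' where "G' = (Gam_low a b Js al xh i + G$i) / 2"
      have G'b: "Gam_low a b Js al xh i < G'" "G' < G$i" using lt unfolding G'_def by auto
      have G'r: "G' \<in> {0 .. real (card (Js i))}" using G'b gl Gb[of i] by auto
      have eq: "slack a b xh i = Pfun al Js i (Gam_low a b Js al xh i) xh"
        using standing[OF i] gl by auto
      have "Pfun al Js i (Gam_low a b Js al xh i) xh \<le> Pfun al Js i G' xh"
        using G'b G'r gl by (intro Pfun_mono al_nonneg) auto
      moreover have "Pfun al Js i G' xh \<le> (\<Sum>j\<in>Js i. y i j) + G' * z i"
        using G'r by (intro Pfun_upper vy y0 z0) auto
      moreover have "G' * z i \<le> G$i * z i" using G'b z0[of i] by (intro mult_right_mono) auto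
      ultimately have "slack a b xh i = Pfun al Js i G' xh" using eq sge[of i] by linarith
      then have "G' = Gam_low a b Js al xh i" using standing[OF i] G'r by blast
      then show False using G'b by simp
    qed
  next
    fix i assume "i \<in> UNIV - Ihat a b Js al xh"
    show "0 \<le> G$i" "G$i \<le> real (card (Js i))" using Gb by auto
  qed
  then show "(\<forall>i. (\<Sum>j\<in>UNIV. a i j * xh j) \<ge> b i) \<and> Theta a b Js al xh \<inter> \<Omega> \<noteq> {}"
    using A P by blast
next
  assume "(\<forall>i. (\<Sum>j\<in>UNIV. a i j * xh j) \<ge> b i) \<and> Theta a b Js al xh \<inter> \<Omega> \<noteq> {}"
  then obtain G where A: "\<forall>i. (\<Sum>j\<in>UNIV. a i j * xh j) \<ge> b i" and GT: "G \<in> Theta a b Js al xh" and GO: "G \<in> \<Omega>"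
    by blast
  define Pr where "Pr i Y Z \<longleftrightarrow> Z \<ge> 0 \<and> (\<forall>j\<in>Js i. Y j \<ge> 0 \<and> al i j * \<bar>xh j\<bar> \<le> Y j + Z)
      \<and> (\<Sum>j\<in>Js i. Y j) + G$i * Z \<le> slack a b xh i \<and> 0 \<le> G$i \<and> G$i \<le> real (card (Js i))"
    for i and Y :: "'n \<Rightarrow> real" and Z :: real
  have ex: "\<exists>Y Z. Pr i Y Z" for i
  proof (cases "i \<in> Ihat a b Js al xh")
    case True
    have gl: "0 \<le> Gam_low a b Js al xh i" "Gam_low a b Js al xh i \<le> real (card (Js i))"
      using Gam_low_bounds[OF _ al_nonneg True] by auto
    have Gi: "0 \<le> G$i" "G$i \<le> Gam_low a b Js al xh i" using GT True unfolding Theta_def by auto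
    have eq: "slack a b xh i = Pfun al Js i (Gam_low a b Js al xh i) xh"
      using standing[OF True] gl by auto
    obtain Z where Z: "Z \<ge> 0" "(\<Sum>j\<in>Js i. max (al i j * \<bar>xh j\<bar> - Z) 0) + G$i * Z = Pfun al Js i (G$i) xh"
      using Pfun_attain[of Js i al, OF _ al_nonneg Gi(1)] Gi gl by fastforce
    have "Pfun al Js i (G$i) xh \<le> Pfun al Js i (Gam_low a b Js al xh i) xh"
      using Gi gl by (intro Pfun_mono al_nonneg) auto
    then show ?thesis
      apply (intro exI[of _ "\<lambda>j. max (al i j * \<bar>xh j\<bar> - Z) 0"] exI[of _ Z])
      using Z eq Gi gl by (auto simp: Pr_def)
  next
    case False
    have Gi: "0 \<le> G$i" "G$i \<le> real (card (Js i))" using GT False unfolding Theta_def by auto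
    have "0 \<le> slack a b xh i" using A unfolding slack_def by simp
    then have "(\<Sum>j\<in>Js i. al i j * \<bar>xh j\<bar>) \<le> slack a b xh i" using False unfolding Ihat_def by auto
    then show ?thesis
      apply (intro exI[of _ "\<lambda>j. al i j * \<bar>xh j\<bar>"] exI[of _ 0])
      using Gi al_nonneg by (auto simp: Pr_def)
  qed
  define Y where "Y i = (SOME Y. \<exists>Z. Pr i Y Z)" for i
  define Z where "Z i = (SOME Z. Pr i (Y i) Z)" for i
  have YZ0: "Pr i (Y i) (Z i)" for i
  proof -
    have "\<exists>Z. Pr i (SOME Y. \<exists>Z. Pr i Y Z) Z" using ex[of i] by (rule someI_ex)
    then have "\<exists>Z. Pr i (Y i) Z" unfolding Y_def .
    then have "Pr i (Y i) (SOME Z. Pr i (Y i) Z)" by (rule someI_ex)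
    then show ?thesis unfolding Z_def .
  qed
  have YZ: "Z i \<ge> 0 \<and> (\<forall>j\<in>Js i. Y i j \<ge> 0 \<and> al i j * \<bar>xh j\<bar> \<le> Y i j + Z i)
      \<and> (\<Sum>j\<in>Js i. Y i j) + G$i * Z i \<le> slack a b xh i \<and> 0 \<le> G$i \<and> G$i \<le> real (card (Js i))" for i
    using YZ0[of i] unfolding Pr_def .
  define p :: "'m \<Rightarrow> real" where "p = (\<lambda>i. 1 / real CARD('m))"
  have psum: "(\<Sum>i\<in>UNIV. p i) = 1" unfolding p_def by simp
  have "RLO_CCU_DG_feasible_point a b Js al xh \<Omega> G (\<lambda>j. \<Sum>i\<in>UNIV. a i j * p i)
     (\<lambda>i j. al i j * \<bar>xh j\<bar>) Y Z p (\<lambda>i j. 0) (\<lambda>i j. 0) (\<lambda>i j. 0)"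
    unfolding RLO_CCU_DG_feasible_point_def
  proof (intro conjI allI ballI)
    fix i j assume j: "j \<in> Js i"
    have "\<bar>al i j * xh j\<bar> = al i j * \<bar>xh j\<bar>" using al_nonneg[OF j] by (simp add: abs_mult)
    then show "al i j * xh j + al i j * \<bar>xh j\<bar> \<ge> 0" "- al i j * xh j + al i j * \<bar>xh j\<bar> \<ge> 0"
      by linarith+
    show "al i j * \<bar>xh j\<bar> \<le> Y i j + Z i" using YZ[of i] j by blast
    show "Y i j \<ge> 0" using YZ[of i] j by blast
    show "(0::real) \<le> p i" "(0::real) = 0 + 0" "(0::real) \<le> 0" "(0::real) \<le> 0" "(0::real) \<le> 0"
      unfolding p_def by simp_all
  next
    fix i
    show "b i \<le> (\<Sum>j\<in>UNIV. a i j * xh j) - (\<Sum>j\<in>Js i. Y i j) - G$i * Z i"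
      using YZ[of i] unfolding slack_def by linarith
    show "Z i \<ge> 0" "0 \<le> G$i" "G$i \<le> real (card (Js i))" using YZ[of i] by blast+
    show "(\<Sum>j\<in>Js i. (0::real)) \<le> G$i * p i" using YZ[of i] unfolding p_def by simp
    show "0 \<le> p i" unfolding p_def by simp
  next
    fix j
    show "(\<Sum>i\<in>UNIV. a i j * p i) + (\<Sum>i\<in>{i. j \<in> Js i}. al i j * (0 - 0)) = (\<Sum>i\<in>UNIV. a i j * p i)"
      by simp
  qed (use GO psum in blast)+
  then show "RLO_CCU_DG_feasible a b Js al xh \<Omega>" unfolding RLO_CCU_DG_feasible_def by blast
qed

end
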